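(* Let $H\in(0,1)$, $n\ge1$, and let $B^1_H,\dots,B^n_H$ be independent fractional Brownian motions with Hurst index $H$. Define $I^{n-1}_F(t)=B^1_H\big(|B^2_H(\cdots|B^n_H(t)|^{1/H}\cdots)|^{1/H}\big)$. Then for every $t>0$, $$I^{n-1}_F(t)\ \stackrel{d}{=}\ B^1\big(|B^2(\cdots|B^n_H(t)|^2\cdots)|^2\big)\ \stackrel{d}{=}\ \prod_{i=1}^n B^i_{H/n}(t),$$ where $B^1,\dots,B^{n-1}$ are independent standard Brownian motions and $B^1_{H/n},\dots,B^n_{H/n}$ are independent fractional Brownian motions with Hurst index $H/n$. In particular, for $s,t>0$, $$E\Big\{\prod_{i=1}^nB^i_{H/n}(t)\prod_{i=1}^nB^i_{H/n}(s)\Big\}=\frac{1}{2^n}\Big(|t|^{2H/n}+|s|^{2H/n}-|t-s|^{2H/n}\Big)^n.$$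
   Context: A fractional Brownian motion $B_H$ with Hurst index $H\in(0,1)$ is a centered Gaussian process with covariance $\frac12(|t|^{2H}+|s|^{2H}-|t-s|^{2H})$; $B=B_{1/2}$ is standard Brownian motion. For independent processes $X$ and $Y\ge0$, $X(Y(t))$ denotes subordination, with density $\int_0^\infty f_X(x,s)f_Y(s,t)ds$; iterated compositions are defined recursively. *)

theory Defs
  imports "HOL-Probability.Probability"
begin

definition fbm_cov :: "real \<Rightarrow> real \<Rightarrow> real \<Rightarrow> real" where
  "fbm_cov H t s = (\<bar>t\<bar> powr (2*H) + \<bar>s\<bar> powr (2*H) - \<bar>t - s\<bar> powr (2*H)) / 2"

text \<open>Centered Gaussian process with covariance K: every finite linear combination
  of values is centered normal with the variance prescribed by K (point mass at 0 when
  that variance vanishes).\<close>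
definition centered_gaussian_process ::
  "'a measure \<Rightarrow> (real \<Rightarrow> 'a \<Rightarrow> real) \<Rightarrow> (real \<Rightarrow> real \<Rightarrow> real) \<Rightarrow> bool" where
  "centered_gaussian_process M X K \<longleftrightarrow>
     prob_space M \<and> (\<forall>t. X t \<in> borel_measurable M) \<and>
     (\<forall>(ts::real list) (cs::real list). length cs = length ts \<longrightarrow>
        (let v = (\<Sum>i<length ts. \<Sum>j<length ts. cs!i * cs!j * K (ts!i) (ts!j)) in
         distr M borel (\<lambda>\<omega>. \<Sum>i<length ts. cs!i * X (ts!i) \<omega>) =
           (if v = 0 then return borel 0 else density lborel (normal_density 0 (sqrt v)))))"

text \<open>Fractional Brownian motion with Hurst index H (standard BM: H = 1/2).\<close>
definition is_fbm :: "'a measure \<Rightarrow> real \<Rightarrow> (real \<Rightarrow> 'a \<Rightarrow> real) \<Rightarrow> bool" where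
  "is_fbm M H X \<longleftrightarrow> 0 < H \<and> H < 1 \<and> centered_gaussian_process M X (fbm_cov H)"

definition indep_processes :: "'a measure \<Rightarrow> (nat \<Rightarrow> real \<Rightarrow> 'a \<Rightarrow> real) \<Rightarrow> nat set \<Rightarrow> bool" where
  "indep_processes M X I \<longleftrightarrow>
     prob_space.indep_vars M (\<lambda>_. Pi\<^sub>M UNIV (\<lambda>_::real. (borel :: real measure)))
       (\<lambda>i \<omega>. \<lambda>t. X i t \<omega>) I"

definition law :: "'a measure \<Rightarrow> (real \<Rightarrow> 'a \<Rightarrow> real) \<Rightarrow> real \<Rightarrow> real measure" where
  "law M X s = distr M borel (X s)"

text \<open>Law of the iterated subordination X_1(g(X_2(g(... X_m(t))))) in the sense of the
  paper: the law of X(Y(t)) is the mixture of the laws of X(s) over the law of Y(t)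
  (density \<open>\<integral> f_X(x,s) f_Y(s,t) ds\<close>). The list contains the one-dimensional laws
  of X_1, ..., X_m; g is the map applied to the inner process before subordinating.\<close>
fun subord_law :: "(real \<Rightarrow> real measure) list \<Rightarrow> (real \<Rightarrow> real) \<Rightarrow> real \<Rightarrow> real measure" where
  "subord_law [] g t = return borel t"
| "subord_law [L] g t = L t"
| "subord_law (L # Ls) g t = bind (subord_law Ls g t) (\<lambda>x. L (g x))"

end

theory Submission imports Defs begin

definition NN :: "real measure" where "NN = density lborel std_normal_density"
definition GG :: "real \<Rightarrow> real measure" where
  "GG v = (if v = 0 then return borel 0 else density lborel (normal_density 0 (sqrt v)))"

lemma prob_NN: "prob_space NN"
  unfolding NN_def by (rule prob_space_normal_density) simp

lemma sets_NN[measurable_cong, simp]: "sets NN = sets borel"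
  by (simp add: NN_def)

lemma space_NN[simp]: "space NN = UNIV"
  by (simp add: NN_def)

lemma NN_subprob: "NN \<in> space (subprob_algebra borel)"
  using prob_NN by (simp add: space_subprob_algebra prob_space_imp_subprob_space)

lemma distr_NN_affine:
  assumes "a \<noteq> 0"
  shows "distr NN borel (\<lambda>z. a * z) = density lborel (normal_density 0 \<bar>a\<bar>)"
proof -
  interpret prob_space NN by (rule prob_NN)
  have d: "distributed NN lborel (\<lambda>x. x) (normal_density 0 1)"
    unfolding distributed_def NN_def
    by (auto simp: distr_id2)
  have "distributed NN lborel (\<lambda>x. 0 + a * x) (normal_density (0 + a * 0) (\<bar>a\<bar> * 1))"
    by (rule normal_density_affine[OF d]) (use assms in auto)
  then have "distr NN lborel (\<lambda>z. a * z) = density lborel (normal_density 0 \<bar>a\<bar>)"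
    unfolding distributed_def by simp
  moreover have "distr NN borel (\<lambda>z. a * z) = distr NN lborel (\<lambda>z. a * z)"
    by (rule distr_cong) auto
  ultimately show ?thesis by simp
qed

lemma GG_eq: assumes "0 \<le> v" shows "GG v = distr NN borel (\<lambda>z. sqrt v * z)"
proof (cases "v = 0")
  case True
  interpret prob_space NN by (rule prob_NN)
  show ?thesis using True by (simp add: GG_def)
next
  case False
  then show ?thesis using assms by (simp add: GG_def distr_NN_affine)
qed

lemma distr_NN_abs: "distr NN borel (\<lambda>z. \<bar>a\<bar> * z) = distr NN borel (\<lambda>z. a * z)"
proof (cases "a = 0")
  case True then show ?thesis by simp
next
  case False
  then show ?thesis by (simp add: distr_NN_affine)
qed

definition KK :: "real \<Rightarrow> real measure" where "KK x = distr NN borel (\<lambda>z. x * z)"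

lemma KK_meas[measurable]: "KK \<in> measurable borel (subprob_algebra borel)"
  unfolding KK_def
  by (rule measurable_distr2[where M=borel]) (auto intro!: measurable_const NN_subprob)


primrec ZZ :: "nat \<Rightarrow> real measure" where
  "ZZ 0 = return borel 1"
| "ZZ (Suc k) = bind (ZZ k) KK"

lemma KK_space: "KK x \<in> space (subprob_algebra borel)"
  using measurable_space[OF KK_meas] by auto

lemma ZZ_props: "sets (ZZ k) = sets borel \<and> prob_space (ZZ k)"
proof (induction k)
  case 0 then show ?case by (simp add: prob_space_return)
next
  case (Suc k)
  then have s: "sets (ZZ k) = sets borel" and p: "prob_space (ZZ k)" by auto
  have ne: "space (ZZ k) \<noteq> {}" using p prob_space.not_empty by blast
  have m: "KK \<in> measurable (ZZ k) (subprob_algebra borel)"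
    using KK_meas s by (simp cong: measurable_cong_sets)
  have "sets (ZZ (Suc k)) = sets borel"
    unfolding ZZ.simps by (rule sets_bind[OF _ ne]) (simp add: KK_def)
  moreover have "prob_space (ZZ (Suc k))"
    unfolding ZZ.simps
    by (rule prob_space.prob_space_bind[OF p _ m]) (auto simp: KK_def intro!: prob_space.prob_space_distr prob_NN)
  ultimately show ?case by simp
qed

lemma sets_ZZ[measurable_cong, simp]: "sets (ZZ k) = sets borel" using ZZ_props by blast
lemma prob_ZZ: "prob_space (ZZ k)" using ZZ_props by blast
lemma space_ZZ[simp]: "space (ZZ k) = UNIV" using sets_eq_imp_space_eq[OF sets_ZZ] by simp

lemma ZZ_step:
  "bind (distr (ZZ k) borel (\<lambda>x. a * x)) (\<lambda>x. distr NN borel (\<lambda>z. x * (b * z)))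
     = distr (ZZ (Suc k)) borel (\<lambda>x. a * b * x)"
proof -
  have m1: "(\<lambda>x. distr NN borel (\<lambda>z. x * (b * z))) \<in> measurable borel (subprob_algebra borel)"
    by (rule measurable_distr2[where M=borel]) (auto intro!: measurable_const NN_subprob)
  have "bind (distr (ZZ k) borel (\<lambda>x. a * x)) (\<lambda>x. distr NN borel (\<lambda>z. x * (b * z)))
      = bind (ZZ k) (\<lambda>x. distr NN borel (\<lambda>z. (a * x) * (b * z)))"
    by (rule bind_distr[OF _ m1]) auto
  also have "\<dots> = bind (ZZ k) (\<lambda>x. distr (KK x) borel (\<lambda>y. a * b * y))"
    by (rule bind_cong) (auto simp: KK_def distr_distr comp_def ac_simps)
  also have "\<dots> = distr (ZZ (Suc k)) borel (\<lambda>x. a * b * x)"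
    unfolding ZZ.simps
    by (rule distr_bind[symmetric, where K=borel]) (auto simp: measurable_cong_sets[OF sets_ZZ refl])
  finally show ?thesis .
qed


lemma ZZ1: "bind (return borel 1) KK = KK 1"
  by (simp add: bind_return[OF KK_meas])

lemma subord_ZZ_aux:
  fixes L :: "nat \<Rightarrow> real \<Rightarrow> real measure"
  assumes last: "L n t = distr NN borel (\<lambda>z. a * z)"
    and ker: "\<forall>i\<in>{1..<n}. \<forall>x. L i (g x) = KK x"
  shows "k < n \<Longrightarrow> subord_law (map L [n-k..<n+1]) g t = distr (ZZ (Suc k)) borel (\<lambda>x. a * x)"
proof (induction k)
  case 0
  have "[n..<n+1] = [n]" by simp
  then show ?case using last
    by (simp add: ZZ1 KK_def distr_distr comp_def)
next
  case (Suc k)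
  then have IH: "subord_law (map L [n-k..<n+1]) g t = distr (ZZ (Suc k)) borel (\<lambda>x. a * x)" by simp
  have s1: "Suc (n - Suc k) = n - k" using Suc.prems by arith
  have e1: "[n - Suc k..<n+1] = (n - Suc k) # [n-k..<n+1]"
    by (subst upt_conv_Cons) (use s1 in auto)
  have e2: "[n-k..<n+1] = (n-k) # [Suc (n-k)..<n+1]" by (rule upt_conv_Cons) simp
  have "subord_law (map L [n - Suc k..<n+1]) g t
      = bind (subord_law (map L [n-k..<n+1]) g t) (\<lambda>x. L (n - Suc k) (g x))"
    by (simp only: e1 e2 list.map subord_law.simps)
  also have "\<dots> = bind (distr (ZZ (Suc k)) borel (\<lambda>x. a * x)) (\<lambda>x. distr NN borel (\<lambda>z. x * (1 * z)))"
    unfolding IH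
    apply (rule bind_cong[OF refl])
    using ker Suc.prems by (auto simp: KK_def)
  also have "\<dots> = distr (ZZ (Suc (Suc k))) borel (\<lambda>x. a * x)"
    using ZZ_step[of "Suc k" a 1] by simp
  finally show ?case .
qed

lemma subord_ZZ:
  fixes L :: "nat \<Rightarrow> real \<Rightarrow> real measure"
  assumes "1 \<le> n" "L n t = distr NN borel (\<lambda>z. a * z)"
    and "\<forall>i\<in>{1..<n}. \<forall>x. L i (g x) = KK x"
  shows "subord_law (map L [1..<n+1]) g t = distr (ZZ n) borel (\<lambda>x. a * x)"
  using subord_ZZ_aux[OF assms(2,3), of "n - 1"] assms(1) by simp


lemma fbm_basic:
  assumes "is_fbm M H X"
  shows "prob_space M" "X t \<in> borel_measurable M"
  using assms by (auto simp: is_fbm_def centered_gaussian_process_def)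

lemma cgp_D:
  assumes "centered_gaussian_process M X K" "length cs = length ts"
  shows "distr M borel (\<lambda>\<omega>. \<Sum>i<length ts. cs!i * X (ts!i) \<omega>) =
     (let v = (\<Sum>i<length ts. \<Sum>j<length ts. cs!i * cs!j * K (ts!i) (ts!j)) in
      if v = 0 then return borel 0 else density lborel (normal_density 0 (sqrt v)))"
  using assms unfolding centered_gaussian_process_def Let_def by blast

lemma fbm_cov_diag: "fbm_cov H s s = \<bar>s\<bar> powr (2*H)"
  by (simp add: fbm_cov_def)

lemma law_fbm:
  assumes "is_fbm M H X"
  shows "law M X s = GG (\<bar>s\<bar> powr (2*H))"
proof -
  have c: "centered_gaussian_process M X (fbm_cov H)" using assms by (simp add: is_fbm_def)
  from c have "distr M borel (\<lambda>\<omega>. \<Sum>i<length [s]. [1::real]!i * X ([s]!i) \<omega>) =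
     (let v = (\<Sum>i<length [s]. \<Sum>j<length [s]. [1::real]!i * [1::real]!j * fbm_cov H ([s]!i) ([s]!j)) in
      if v = 0 then return borel 0 else density lborel (normal_density 0 (sqrt v)))"
    by (rule cgp_D) simp
  then show ?thesis by (simp add: law_def GG_def fbm_cov_diag)
qed

lemma law_fbm_diff:
  assumes "is_fbm M H X"
  shows "distr M borel (\<lambda>\<omega>. X t \<omega> - X s \<omega>) = GG (\<bar>t - s\<bar> powr (2*H))"
proof -
  have c: "centered_gaussian_process M X (fbm_cov H)" using assms by (simp add: is_fbm_def)
  from c have "distr M borel (\<lambda>\<omega>. \<Sum>i<length [t,s]. [1::real,-1]!i * X ([t,s]!i) \<omega>) =
     (let v = (\<Sum>i<length [t,s]. \<Sum>j<length [t,s]. [1::real,-1]!i * [1::real,-1]!j * fbm_cov H ([t,s]!i) ([t,s]!j)) in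
      if v = 0 then return borel 0 else density lborel (normal_density 0 (sqrt v)))"
    by (rule cgp_D) simp
  moreover have "(\<Sum>i<length [t,s]. \<Sum>j<length [t,s]. [1::real,-1]!i * [1::real,-1]!j * fbm_cov H ([t,s]!i) ([t,s]!j))
     = \<bar>t - s\<bar> powr (2*H)"
    by (simp add: fbm_cov_def numeral_2_eq_2 lessThan_Suc abs_minus_commute field_simps)
  moreover have "(\<lambda>\<omega>. \<Sum>i<length [t,s]. [1::real,-1]!i * X ([t,s]!i) \<omega>) = (\<lambda>\<omega>. X t \<omega> - X s \<omega>)"
    by (simp add: numeral_2_eq_2 lessThan_Suc)
  ultimately show ?thesis by (simp add: GG_def Let_def)
qed


lemma mult_meas_pair[measurable]: "(\<lambda>(x::real,y). x * y) \<in> borel_measurable (borel \<Otimes>\<^sub>M borel)"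
proof -
  have m: "(\<lambda>p::real\<times>real. fst p * snd p) \<in> borel_measurable (borel \<Otimes>\<^sub>M borel)" by measurable
  have e: "(\<lambda>(x::real,y). x * y) = (\<lambda>p::real\<times>real. fst p * snd p)" by auto
  show ?thesis by (subst e) (rule m)
qed

lemma (in prob_space) distr_mult_indep:
  fixes X Y :: "'a \<Rightarrow> real"
  assumes ind: "indep_var borel X borel Y"
  shows "distr M borel (\<lambda>\<omega>. X \<omega> * Y \<omega>) =
     bind (distr M borel X) (\<lambda>x. distr (distr M borel Y) borel (\<lambda>y. x * y))"
proof -
  have rX[measurable]: "X \<in> borel_measurable M" and rY[measurable]: "Y \<in> borel_measurable M"
    using ind by (auto simp: indep_var_distribution_eq)
  have eq: "distr M borel X \<Otimes>\<^sub>M distr M borel Y = distr M (borel \<Otimes>\<^sub>M borel) (\<lambda>x. (X x, Y x))"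
    using ind by (simp add: indep_var_distribution_eq)
  let ?DX = "distr M borel X" and ?DY = "distr M borel Y"
  interpret DX: prob_space ?DX by (rule prob_space_distr) simp
  interpret DY: prob_space ?DY by (rule prob_space_distr) simp
  have "distr M borel (\<lambda>\<omega>. X \<omega> * Y \<omega>) =
        distr (distr M (borel \<Otimes>\<^sub>M borel) (\<lambda>x. (X x, Y x))) borel (\<lambda>(x,y). x * y)"
    by (subst distr_distr) (auto simp: comp_def mult_meas_pair)
  also have "\<dots> = distr (?DX \<Otimes>\<^sub>M ?DY) borel (\<lambda>(x,y). x * y)"
    by (simp add: eq)
  also have "\<dots> = bind ?DX (\<lambda>x. distr ?DY borel (\<lambda>y. x * y))"
  proof (rule measure_eqI)
    have F: "(\<lambda>x. distr ?DY borel (\<lambda>y. x * y)) \<in> measurable ?DX (subprob_algebra borel)"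
      by (rule measurable_distr2[where M=borel])
         (auto intro!: measurable_const simp: space_subprob_algebra prob_space_imp_subprob_space DY.prob_space_axioms)
    show "sets (distr (?DX \<Otimes>\<^sub>M ?DY) borel (\<lambda>(x,y). x * y)) = sets (bind ?DX (\<lambda>x. distr ?DY borel (\<lambda>y. x * y)))"
      by (subst sets_bind) (auto simp: DX.not_empty)
    fix A assume A: "A \<in> sets (distr (?DX \<Otimes>\<^sub>M ?DY) borel (\<lambda>(x,y). x * y))"
    then have A': "A \<in> sets borel" by simp
    have "emeasure (distr (?DX \<Otimes>\<^sub>M ?DY) borel (\<lambda>(x,y). x * y)) A
        = emeasure (?DX \<Otimes>\<^sub>M ?DY) ((\<lambda>(x,y). x * y) -` A \<inter> space (?DX \<Otimes>\<^sub>M ?DY))"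
      using A' by (subst emeasure_distr) auto
    also have "\<dots> = (\<integral>\<^sup>+x. emeasure ?DY (Pair x -` ((\<lambda>(x,y). x * y) -` A \<inter> space (?DX \<Otimes>\<^sub>M ?DY))) \<partial>?DX)"
      using A' measurable_sets[OF mult_meas_pair A'] by (subst DY.emeasure_pair_measure_alt) (auto simp: space_pair_measure)
    also have "\<dots> = (\<integral>\<^sup>+x. emeasure (distr ?DY borel (\<lambda>y. x * y)) A \<partial>?DX)"
      using A' by (intro nn_integral_cong) (auto simp: emeasure_distr space_pair_measure intro!: arg_cong2[where f=emeasure])
    also have "\<dots> = emeasure (bind ?DX (\<lambda>x. distr ?DY borel (\<lambda>y. x * y))) A"
      using A' by (subst emeasure_bind[OF DX.not_empty F]) auto
    finally show "emeasure (distr (?DX \<Otimes>\<^sub>M ?DY) borel (\<lambda>(x,y). x * y)) A = emeasure (bind ?DX (\<lambda>x. distr ?DY borel (\<lambda>y. x * y))) A" .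
  qed
  finally show ?thesis .
qed


lemma (in prob_space) prod_indep_law:
  fixes Xs :: "nat \<Rightarrow> 'a \<Rightarrow> real"
  assumes ind: "indep_vars (\<lambda>_. borel) Xs I" and fin: "finite J" "J \<subseteq> I"
    and law: "\<forall>i\<in>I. distr M borel (Xs i) = distr NN borel (\<lambda>z. c * z)"
  shows "distr M borel (\<lambda>\<omega>. \<Prod>i\<in>J. Xs i \<omega>) = distr (ZZ (card J)) borel (\<lambda>x. c ^ card J * x)"
  using fin
proof (induction J rule: finite_subset_induct')
  case empty
  then show ?case by (simp add: distr_return)
next
  case (insert a F)
  have rv[measurable]: "\<And>i. i \<in> I \<Longrightarrow> Xs i \<in> borel_measurable M"
    using ind by (auto simp: indep_vars_def)
  have iv: "indep_var (Pi\<^sub>M F (\<lambda>_. borel)) (\<lambda>\<omega>. restrict (\<lambda>i. Xs i \<omega>) F)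
                      (Pi\<^sub>M {a} (\<lambda>_. borel)) (\<lambda>\<omega>. restrict (\<lambda>i. Xs i \<omega>) {a})"
    by (rule indep_var_restrict[OF ind]) (use insert in auto)
  have m1: "(\<lambda>f. \<Prod>i\<in>F. f i :: real) \<in> borel_measurable (Pi\<^sub>M F (\<lambda>_. borel))"
    by measurable
  have m2: "(\<lambda>f. f a :: real) \<in> borel_measurable (Pi\<^sub>M {a} (\<lambda>_. borel))"
    by measurable
  have "indep_var borel ((\<lambda>f. \<Prod>i\<in>F. f i) \<circ> (\<lambda>\<omega>. restrict (\<lambda>i. Xs i \<omega>) F))
                  borel ((\<lambda>f. f a) \<circ> (\<lambda>\<omega>. restrict (\<lambda>i. Xs i \<omega>) {a}))"
    by (rule indep_var_compose[OF iv m1 m2])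
  moreover have "((\<lambda>f. \<Prod>i\<in>F. f i) \<circ> (\<lambda>\<omega>. restrict (\<lambda>i. Xs i \<omega>) F)) = (\<lambda>\<omega>. \<Prod>i\<in>F. Xs i \<omega>)"
    by (auto simp: comp_def intro!: prod.cong)
  moreover have "((\<lambda>f. f a) \<circ> (\<lambda>\<omega>. restrict (\<lambda>i. Xs i \<omega>) {a})) = Xs a"
    by (auto simp: comp_def)
  ultimately have ind2: "indep_var borel (\<lambda>\<omega>. \<Prod>i\<in>F. Xs i \<omega>) borel (Xs a)" by simp
  have "distr M borel (\<lambda>\<omega>. \<Prod>i\<in>insert a F. Xs i \<omega>) = distr M borel (\<lambda>\<omega>. (\<Prod>i\<in>F. Xs i \<omega>) * Xs a \<omega>)"
    using insert by (simp add: mult.commute)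
  also have "\<dots> = bind (distr M borel (\<lambda>\<omega>. \<Prod>i\<in>F. Xs i \<omega>)) (\<lambda>x. distr (distr M borel (Xs a)) borel (\<lambda>y. x * y))"
    by (rule distr_mult_indep[OF ind2])
  also have "\<dots> = bind (distr (ZZ (card F)) borel (\<lambda>x. c ^ card F * x)) (\<lambda>x. distr NN borel (\<lambda>z. x * (c * z)))"
    using insert law by (simp add: distr_distr comp_def)
  also have "\<dots> = distr (ZZ (Suc (card F))) borel (\<lambda>x. c ^ card F * c * x)"
    by (rule ZZ_step)
  finally show ?case using insert by (simp add: mult.commute)
qed


lemma NN_moment2:
  "integrable NN (\<lambda>z. (a * z)^2)" "(\<integral>z. (a * z)^2 \<partial>NN) = a^2"
proof -
  have i: "integrable lborel (\<lambda>z. std_normal_density z * z^2)"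
    by (rule integrable_std_normal_moment)
  have e: "(\<lambda>z. std_normal_density z * (a * z)^2) = (\<lambda>z. a^2 * (std_normal_density z * z^2))"
    by (auto simp: power_mult_distrib)
  have i2: "integrable lborel (\<lambda>z. std_normal_density z * (a * z)^2)"
    unfolding e by (rule integrable_mult_right[OF i])
  show "integrable NN (\<lambda>z. (a * z)^2)"
    unfolding NN_def by (subst integrable_density) (auto intro!: i2)
  have v: "integral\<^sup>L lborel (\<lambda>z. std_normal_density z * z^2) = 1"
    using integral_std_normal_moment_even[of 1] by simp
  show "(\<integral>z. (a * z)^2 \<partial>NN) = a^2"
    unfolding NN_def by (subst integral_density) (auto simp: e v)
qed

lemma second_moment:
  fixes X :: "'a \<Rightarrow> real"
  assumes X[measurable]: "X \<in> borel_measurable M" and d: "distr M borel X = GG v" and v: "0 \<le> v"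
  shows "integrable M (\<lambda>\<omega>. (X \<omega>)^2)" "(\<integral>\<omega>. (X \<omega>)^2 \<partial>M) = v"
proof -
  have d': "distr M borel X = distr NN borel (\<lambda>z. sqrt v * z)" using d GG_eq[OF v] by simp
  have "integrable (distr M borel X) (\<lambda>x. x^2)"
    unfolding d' by (subst integrable_distr_eq) (auto intro: NN_moment2)
  then show "integrable M (\<lambda>\<omega>. (X \<omega>)^2)"
    by (subst (asm) integrable_distr_eq) auto
  have "(\<integral>\<omega>. (X \<omega>)^2 \<partial>M) = (\<integral>x. x^2 \<partial>distr M borel X)"
    by (subst integral_distr) auto
  also have "\<dots> = (\<integral>z. (sqrt v * z)^2 \<partial>NN)"
    unfolding d' by (subst integral_distr) auto
  also have "\<dots> = v" using NN_moment2(2)[of "sqrt v"] v by simp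
  finally show "(\<integral>\<omega>. (X \<omega>)^2 \<partial>M) = v" .
qed

lemma fbm_cross_moment:
  assumes fbm: "is_fbm M H X"
  shows "integrable M (\<lambda>\<omega>. X t \<omega> * X s \<omega>)" "(\<integral>\<omega>. X t \<omega> * X s \<omega> \<partial>M) = fbm_cov H t s"
proof -
  note m[measurable] = fbm_basic(2)[OF fbm]
  have it: "integrable M (\<lambda>\<omega>. (X t \<omega>)^2)" and et: "(\<integral>\<omega>. (X t \<omega>)^2 \<partial>M) = \<bar>t\<bar> powr (2*H)"
    using second_moment[of "X t" M "\<bar>t\<bar> powr (2*H)"] law_fbm[OF fbm, of t] by (auto simp: law_def)
  have is': "integrable M (\<lambda>\<omega>. (X s \<omega>)^2)" and es: "(\<integral>\<omega>. (X s \<omega>)^2 \<partial>M) = \<bar>s\<bar> powr (2*H)"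
    using second_moment[of "X s" M "\<bar>s\<bar> powr (2*H)"] law_fbm[OF fbm, of s] by (auto simp: law_def)
  have id: "integrable M (\<lambda>\<omega>. (X t \<omega> - X s \<omega>)^2)" and ed: "(\<integral>\<omega>. (X t \<omega> - X s \<omega>)^2 \<partial>M) = \<bar>t - s\<bar> powr (2*H)"
    using second_moment[of "\<lambda>\<omega>. X t \<omega> - X s \<omega>" M "\<bar>t - s\<bar> powr (2*H)"] law_fbm_diff[OF fbm, of t s] by auto
  have eq: "(\<lambda>\<omega>. X t \<omega> * X s \<omega>) = (\<lambda>\<omega>. ((X t \<omega>)^2 + (X s \<omega>)^2 - (X t \<omega> - X s \<omega>)^2) / 2)"
    by (auto simp: power2_eq_square field_simps)
  show "integrable M (\<lambda>\<omega>. X t \<omega> * X s \<omega>)"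
    unfolding eq using it is' id by auto
  show "(\<integral>\<omega>. X t \<omega> * X s \<omega> \<partial>M) = fbm_cov H t s"
    unfolding eq using it is' id et es ed by (simp add: fbm_cov_def)
qed


lemma abs_powr2: "\<bar>x::real\<bar> powr 2 = x^2"
proof (cases "x = 0")
  case True then show ?thesis by simp
next
  case False then show ?thesis by (simp add: powr_numeral)
qed

lemma KK_sqrt: "distr NN borel (\<lambda>z. sqrt (x^2) * z) = KK x"
  by (simp add: KK_def distr_NN_abs)

lemma indep_proc_at:
  assumes p: "prob_space M" and ind: "indep_processes M X I"
  shows "prob_space.indep_vars M (\<lambda>_. borel) (\<lambda>i \<omega>. X i t \<omega>) I"
proof -
  interpret prob_space M by (rule p)
  have ind': "indep_vars (\<lambda>_. Pi\<^sub>M UNIV (\<lambda>_::real. (borel :: real measure))) (\<lambda>i \<omega>. \<lambda>t. X i t \<omega>) I"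
    using ind unfolding indep_processes_def .
  show ?thesis
    using indep_vars_compose2[OF ind', where Y="\<lambda>i f. f t" and N="\<lambda>_. borel"] by simp
qed

lemma indep_proc_at2:
  assumes p: "prob_space M" and ind: "indep_processes M X I"
  shows "prob_space.indep_vars M (\<lambda>_. borel) (\<lambda>i \<omega>. X i t \<omega> * X i s \<omega>) I"
proof -
  interpret prob_space M by (rule p)
  have ind': "indep_vars (\<lambda>_. Pi\<^sub>M UNIV (\<lambda>_::real. (borel :: real measure))) (\<lambda>i \<omega>. \<lambda>t. X i t \<omega>) I"
    using ind unfolding indep_processes_def .
  show ?thesis
    using indep_vars_compose2[OF ind', where Y="\<lambda>i f. f t * f s" and N="\<lambda>_. borel"] by simp
qed

theorem mainTheorem17:
  fixes H :: real and n :: nat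
    and M1 :: "'a measure" and B :: "nat \<Rightarrow> real \<Rightarrow> 'a \<Rightarrow> real"
    and M2 :: "'b measure" and W :: "nat \<Rightarrow> real \<Rightarrow> 'b \<Rightarrow> real"
    and M3 :: "'c measure" and C :: "nat \<Rightarrow> real \<Rightarrow> 'c \<Rightarrow> real"
  assumes "0 < H" and "H < 1" and "1 \<le> n"
    and "\<forall>i\<in>{1..n}. is_fbm M1 H (B i)" and "indep_processes M1 B {1..n}"
    and "\<forall>i\<in>{1..<n}. is_fbm M2 (1/2) (W i)" and "is_fbm M2 H (W n)"
    and "indep_processes M2 W {1..n}"
    and "\<forall>i\<in>{1..n}. is_fbm M3 (H / real n) (C i)" and "indep_processes M3 C {1..n}"
  shows "(\<forall>t>0.
            subord_law (map (\<lambda>i. law M1 (B i)) [1..<n+1]) (\<lambda>x. \<bar>x\<bar> powr (1/H)) t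
              = subord_law (map (\<lambda>i. law M2 (W i)) [1..<n+1]) (\<lambda>x. \<bar>x\<bar>^2) t
          \<and> subord_law (map (\<lambda>i. law M2 (W i)) [1..<n+1]) (\<lambda>x. \<bar>x\<bar>^2) t
              = distr M3 borel (\<lambda>\<omega>. \<Prod>i\<in>{1..n}. C i t \<omega>))
       \<and> (\<forall>s>0. \<forall>t>0.
            prob_space.expectation M3
              (\<lambda>\<omega>. (\<Prod>i\<in>{1..n}. C i t \<omega>) * (\<Prod>i\<in>{1..n}. C i s \<omega>))
            = (1 / 2^n) * (\<bar>t\<bar> powr (2*H/n) + \<bar>s\<bar> powr (2*H/n) - \<bar>t - s\<bar> powr (2*H/n)) ^ n)"
proof -
  note A = assms
  have n1: "n \<in> {1..n}" using A(3) by simp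
  have fC: "is_fbm M3 (H / real n) (C i)" if "i \<in> {1..n}" for i using A(9) that by blast
  have p3: "prob_space M3" using fbm_basic(1)[OF fC[OF n1]] .
  interpret P3: prob_space M3 by (rule p3)
  have part1: "subord_law (map (\<lambda>i. law M1 (B i)) [1..<n+1]) (\<lambda>x. \<bar>x\<bar> powr (1/H)) t
              = subord_law (map (\<lambda>i. law M2 (W i)) [1..<n+1]) (\<lambda>x. \<bar>x\<bar>^2) t
          \<and> subord_law (map (\<lambda>i. law M2 (W i)) [1..<n+1]) (\<lambda>x. \<bar>x\<bar>^2) t
              = distr M3 borel (\<lambda>\<omega>. \<Prod>i\<in>{1..n}. C i t \<omega>)" if t: "t > 0" for t
  proof -
    define a where "a = sqrt (\<bar>t\<bar> powr (2*H))"
    define c where "c = sqrt (\<bar>t\<bar> powr (2*(H/real n)))"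
    have eB: "subord_law (map (\<lambda>i. law M1 (B i)) [1..<n+1]) (\<lambda>x. \<bar>x\<bar> powr (1/H)) t
        = distr (ZZ n) borel (\<lambda>x. a * x)"
    proof (rule subord_ZZ[OF A(3)])
      show "law M1 (B n) t = distr NN borel (\<lambda>z. a * z)"
        using law_fbm[of M1 H "B n" t] A(4) n1 by (simp add: a_def GG_eq)
      show "\<forall>i\<in>{1..<n}. \<forall>x. law M1 (B i) (\<bar>x\<bar> powr (1/H)) = KK x"
      proof (intro ballI allI)
        fix i x assume i: "i \<in> {1..<n}"
        have "is_fbm M1 H (B i)" using A(4) i by auto
        then have "law M1 (B i) (\<bar>x\<bar> powr (1/H)) = GG ((\<bar>x\<bar> powr (1/H)) powr (2*H))"
          by (simp add: law_fbm)
        also have "(\<bar>x\<bar> powr (1/H)) powr (2*H) = x^2"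
          using A(1) by (simp add: powr_powr abs_powr2)
        finally show "law M1 (B i) (\<bar>x\<bar> powr (1/H)) = KK x"
          by (simp add: GG_eq KK_def distr_NN_abs)
      qed
    qed
    have eW: "subord_law (map (\<lambda>i. law M2 (W i)) [1..<n+1]) (\<lambda>x. \<bar>x\<bar>^2) t
        = distr (ZZ n) borel (\<lambda>x. a * x)"
    proof (rule subord_ZZ[OF A(3)])
      show "law M2 (W n) t = distr NN borel (\<lambda>z. a * z)"
        using law_fbm[of M2 H "W n" t] A(7) by (simp add: a_def GG_eq)
      show "\<forall>i\<in>{1..<n}. \<forall>x. law M2 (W i) (\<bar>x\<bar>^2) = KK x"
      proof (intro ballI allI)
        fix i x assume i: "i \<in> {1..<n}"
        have "is_fbm M2 (1/2) (W i)" using A(6) i by auto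
        then have "law M2 (W i) (\<bar>x\<bar>^2) = GG (\<bar>\<bar>x\<bar>^2\<bar> powr (2*(1/2)))"
          by (simp add: law_fbm)
        also have "\<bar>\<bar>x\<bar>^2\<bar> powr (2*(1/2)) = x^2"
          by simp
        finally show "law M2 (W i) (\<bar>x\<bar>^2) = KK x"
          by (simp add: GG_eq KK_def distr_NN_abs)
      qed
    qed
    have indC: "P3.indep_vars (\<lambda>_. borel) (\<lambda>i \<omega>. C i t \<omega>) {1..n}"
      by (rule indep_proc_at[OF p3 A(10)])
    have lawC: "\<forall>i\<in>{1..n}. distr M3 borel (\<lambda>\<omega>. C i t \<omega>) = distr NN borel (\<lambda>z. c * z)"
    proof
      fix i assume i: "i \<in> {1..n}"
      have "law M3 (C i) t = GG (\<bar>t\<bar> powr (2*(H/real n)))" by (rule law_fbm[OF fC[OF i]])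
      then show "distr M3 borel (\<lambda>\<omega>. C i t \<omega>) = distr NN borel (\<lambda>z. c * z)"
        by (simp add: law_def c_def GG_eq)
    qed
    have eC: "distr M3 borel (\<lambda>\<omega>. \<Prod>i\<in>{1..n}. C i t \<omega>) = distr (ZZ n) borel (\<lambda>x. c ^ n * x)"
      using P3.prod_indep_law[OF indC _ _ lawC, of "{1..n}"] by simp
    have "c ^ n = sqrt ((\<bar>t\<bar> powr (2*(H/real n))) ^ n)"
      by (simp add: c_def real_sqrt_power)
    also have "(\<bar>t\<bar> powr (2*(H/real n))) ^ n = \<bar>t\<bar> powr (2*H)"
      using t A(3) by (subst powr_power) auto
    finally have "c ^ n = a" by (simp add: a_def)
    then show ?thesis using eB eW eC by simp
  qed
  have part2: "P3.expectation (\<lambda>\<omega>. (\<Prod>i\<in>{1..n}. C i t \<omega>) * (\<Prod>i\<in>{1..n}. C i s \<omega>))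
            = (1 / 2^n) * (\<bar>t\<bar> powr (2*H/n) + \<bar>s\<bar> powr (2*H/n) - \<bar>t - s\<bar> powr (2*H/n)) ^ n" for s t
  proof -
    have intC: "\<And>i. i \<in> {1..n} \<Longrightarrow> integrable M3 (\<lambda>\<omega>. C i t \<omega> * C i s \<omega>)"
      using fbm_cross_moment(1)[OF fC] .
    have eC: "\<And>i. i \<in> {1..n} \<Longrightarrow> P3.expectation (\<lambda>\<omega>. C i t \<omega> * C i s \<omega>) = fbm_cov (H / real n) t s"
      using fbm_cross_moment(2)[OF fC] .
    have "P3.expectation (\<lambda>\<omega>. (\<Prod>i\<in>{1..n}. C i t \<omega>) * (\<Prod>i\<in>{1..n}. C i s \<omega>))
        = P3.expectation (\<lambda>\<omega>. \<Prod>i\<in>{1..n}. C i t \<omega> * C i s \<omega>)"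
      by (simp add: prod.distrib)
    also have "\<dots> = (\<Prod>i\<in>{1..n}. P3.expectation (\<lambda>\<omega>. C i t \<omega> * C i s \<omega>))"
      by (rule P3.indep_vars_lebesgue_integral[OF _ indep_proc_at2[OF p3 A(10)] intC]) auto
    also have "\<dots> = (\<Prod>i\<in>{1..n}. fbm_cov (H / real n) t s)"
      by (rule prod.cong[OF refl eC])
    also have "\<dots> = fbm_cov (H / real n) t s ^ n" by simp
    also have "\<dots> = (1 / 2^n) * (\<bar>t\<bar> powr (2*H/n) + \<bar>s\<bar> powr (2*H/n) - \<bar>t - s\<bar> powr (2*H/n)) ^ n"
      by (simp add: fbm_cov_def power_divide)
    finally show ?thesis .
  qed
  show ?thesis using part1 part2 by blast
qed

end
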